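(* Let $A$ be an alphabet and $A^\ast$ the set of all finite words over $A$ (including the empty word), regarded as the structure $(A^\ast,\cdot)$ with the binary concatenation operation. For all words $\mathbf a,\mathbf b,\mathbf c,\mathbf d\in A^\ast$, if $\mathbf a\mathbf b=\mathbf c\mathbf d$ then $(A^\ast,\cdot)\models \mathbf a:\mathbf b::\mathbf c:\mathbf d$.
   Context: The analogical proportion relation: a c-formula is a conjunctive formula (built from atomic formulas using only $\wedge,\exists,\forall$; parameters from the universe allowed) with free variables exactly $x,y$ whose dependency graph (vertices: its variables; edge $\{w,z\}$ iff $w,z$ occur in a common atomic subformula) is connected. $\uparrow_{\mathfrak A}(a\to b)=\{\alpha:\mathfrak A\models\alpha(a,b)\}$, $\uparrow_{\mathfrak A}(a\to b:\cdot\, c\to d)=\uparrow_{\mathfrak A}(a\to b)\cap\uparrow_{\mathfrak A}(c\to d)$. A c-formula is trivial iff it is in $\uparrow_{\mathfrak A}(a\to b:\cdot\, c\to d)$ for all $a,b,c,d$; $\emptyset_{\mathfrak A}$ is the set of these. $\mathfrak A\models a\to b:\cdot\, c\to d$ iff either $\uparrow_{\mathfrak A}(a\to b)\cup\uparrow_{\mathfrak A}(c\to d)$ consists only of trivial formulas, or $\uparrow_{\mathfrak A}(a\to b:\cdot\, c\to d)$ contains a non-trivial formula and for every $d'$, $\emptyset_{\mathfrak A}\subsetneq\uparrow(a\to b:\cdot\, c\to d)\subseteq\uparrow(a\to b:\cdot\, c\to d')$ implies $\emptyset_{\mathfrak A}\subsetneq\uparrow(a\to b:\cdot\, c\to d')\subseteq\uparrow(a\to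 b:\cdot\, c\to d)$. $\mathfrak A\models a:b::c:d$ iff $\mathfrak A\models a\to b:\cdot\, c\to d$, $b\to a:\cdot\, d\to c$, $c\to d:\cdot\, a\to b$ and $d\to c:\cdot\, b\to a$. *)

theory Defs
  imports Main
begin

text \<open>First-order language of the structure (A*, \<cdot>): terms built from variables
  (indexed by nat), parameters (words, i.e. elements of the universe) and the binary
  concatenation; atomic formulas are equations between terms.\<close>

datatype 'a trm = Var nat | Par "'a list" | Cat "'a trm" "'a trm"

datatype 'a fm = Eq "'a trm" "'a trm" | Conj "'a fm" "'a fm" | Ex nat "'a fm" | All nat "'a fm"

fun tval :: "(nat \<Rightarrow> 'a list) \<Rightarrow> 'a trm \<Rightarrow> 'a list" where
  "tval e (Var v) = e v"
| "tval e (Par w) = w"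
| "tval e (Cat s t) = tval e s @ tval e t"

fun sat :: "(nat \<Rightarrow> 'a list) \<Rightarrow> 'a fm \<Rightarrow> bool" where
  "sat e (Eq s t) = (tval e s = tval e t)"
| "sat e (Conj f g) = (sat e f \<and> sat e g)"
| "sat e (Ex v f) = (\<exists>w. sat (e(v := w)) f)"
| "sat e (All v f) = (\<forall>w. sat (e(v := w)) f)"

fun tvars :: "'a trm \<Rightarrow> nat set" where
  "tvars (Var v) = {v}"
| "tvars (Par w) = {}"
| "tvars (Cat s t) = tvars s \<union> tvars t"

fun fv :: "'a fm \<Rightarrow> nat set" where
  "fv (Eq s t) = tvars s \<union> tvars t"
| "fv (Conj f g) = fv f \<union> fv g"
| "fv (Ex v f) = fv f - {v}"
| "fv (All v f) = fv f - {v}"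

fun atoms :: "'a fm \<Rightarrow> ('a trm \<times> 'a trm) set" where
  "atoms (Eq s t) = {(s, t)}"
| "atoms (Conj f g) = atoms f \<union> atoms g"
| "atoms (Ex v f) = atoms f"
| "atoms (All v f) = atoms f"

definition dep_vertices :: "'a fm \<Rightarrow> nat set" where
  "dep_vertices f = (\<Union>(s, t) \<in> atoms f. tvars s \<union> tvars t)"

definition dep_edges :: "'a fm \<Rightarrow> (nat \<times> nat) set" where
  "dep_edges f = {(v, w). \<exists>(s, t) \<in> atoms f. v \<in> tvars s \<union> tvars t \<and> w \<in> tvars s \<union> tvars t}"

definition dep_connected :: "'a fm \<Rightarrow> bool" where
  "dep_connected f = (\<forall>v \<in> dep_vertices f. \<forall>w \<in> dep_vertices f. (v, w) \<in> (dep_edges f)\<^sup>*)"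

text \<open>The two distinguished free variables: x = Var 0, y = Var 1.\<close>
definition c_formula :: "'a fm \<Rightarrow> bool" where
  "c_formula f = (fv f = {0, 1} \<and> dep_connected f)"

definition asg :: "'a list \<Rightarrow> 'a list \<Rightarrow> nat \<Rightarrow> 'a list" where
  "asg a b = (\<lambda>v. if v = 0 then a else if v = 1 then b else [])"

definition up :: "'a list \<Rightarrow> 'a list \<Rightarrow> 'a fm set" where
  "up a b = {f. c_formula f \<and> sat (asg a b) f}"

definition up2 :: "'a list \<Rightarrow> 'a list \<Rightarrow> 'a list \<Rightarrow> 'a list \<Rightarrow> 'a fm set" where
  "up2 a b c d = up a b \<inter> up c d"

definition trivial_fms :: "'a fm set" where
  "trivial_fms = {f. c_formula f \<and> (\<forall>a b c d. f \<in> up2 a b c d)}"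

definition arrow_prop :: "'a list \<Rightarrow> 'a list \<Rightarrow> 'a list \<Rightarrow> 'a list \<Rightarrow> bool" where
  "arrow_prop a b c d =
     (up a b \<union> up c d \<subseteq> trivial_fms \<or>
      ((up2 a b c d - trivial_fms \<noteq> {}) \<and>
       (\<forall>d'. trivial_fms \<subset> up2 a b c d \<and> up2 a b c d \<subseteq> up2 a b c d' \<longrightarrow>
              trivial_fms \<subset> up2 a b c d' \<and> up2 a b c d' \<subseteq> up2 a b c d)))"

definition analogy :: "'a list \<Rightarrow> 'a list \<Rightarrow> 'a list \<Rightarrow> 'a list \<Rightarrow> bool" where
  "analogy a b c d =
     (arrow_prop a b c d \<and> arrow_prop b a d c \<and> arrow_prop c d a b \<and> arrow_prop d c b a)"

end

theory Submission
  imports Defs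
begin

definition p1 :: "'a list \<Rightarrow> 'a fm" where "p1 e = Eq (Cat (Var 0) (Var 1)) (Par e)"
definition p2 :: "'a list \<Rightarrow> 'a fm" where "p2 e = Eq (Cat (Var 1) (Var 0)) (Par e)"

lemma cf1: "c_formula (p1 e)"
  unfolding c_formula_def dep_connected_def dep_vertices_def dep_edges_def p1_def
  by (auto intro!: r_into_rtrancl)

lemma cf2: "c_formula (p2 e)"
  unfolding c_formula_def dep_connected_def dep_vertices_def dep_edges_def p2_def
  by (auto intro!: r_into_rtrancl)

lemma nt1: "p1 e \<notin> trivial_fms"
proof
  assume "p1 e \<in> trivial_fms"
  hence "p1 e \<in> up (e @ [undefined]) []" unfolding trivial_fms_def up2_def by blast
  thus False by (simp add: up_def p1_def asg_def)
qed

lemma nt2: "p2 e \<notin> trivial_fms"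
proof
  assume "p2 e \<in> trivial_fms"
  hence "p2 e \<in> up [] (e @ [undefined])" unfolding trivial_fms_def up2_def by blast
  thus False by (simp add: up_def p2_def asg_def)
qed

lemma key:
  assumes "f \<in> up2 p q r s" "f \<notin> trivial_fms" "\<And>s'. f \<in> up r s' \<Longrightarrow> s' = s"
  shows "arrow_prop p q r s"
  unfolding arrow_prop_def
proof (rule disjI2, rule conjI)
  show "up2 p q r s - trivial_fms \<noteq> {}" using assms by blast
next
  show "\<forall>d'. trivial_fms \<subset> up2 p q r s \<and> up2 p q r s \<subseteq> up2 p q r d' \<longrightarrow> trivial_fms \<subset> up2 p q r d' \<and> up2 p q r d' \<subseteq> up2 p q r s"
  proof (intro allI impI)
  fix d' assume h: "trivial_fms \<subset> up2 p q r s \<and> up2 p q r s \<subseteq> up2 p q r d'"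
  hence "f \<in> up r d'" using assms(1) unfolding up2_def by blast
  hence "d' = s" using assms(3) by blast
  thus "trivial_fms \<subset> up2 p q r d' \<and> up2 p q r d' \<subseteq> up2 p q r s" using h by simp
  qed
qed

theorem corollary11:
  fixes a b c d :: "'a list"
  assumes "a @ b = c @ d"
  shows "analogy a b c d"
  unfolding analogy_def
proof (intro conjI)
  show "arrow_prop a b c d"
    by (rule key[of "p1 (a@b)"])
       (use assms cf1 nt1 in \<open>auto simp: up2_def up_def p1_def asg_def\<close>)
  show "arrow_prop b a d c"
    by (rule key[of "p2 (a@b)"])
       (use assms cf2 nt2 in \<open>auto simp: up2_def up_def p2_def asg_def\<close>)
  show "arrow_prop c d a b"
    by (rule key[of "p1 (a@b)"])
       (use assms[symmetric] cf1 nt1 in \<open>auto simp: up2_def up_def p1_def asg_def\<close>)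
  show "arrow_prop d c b a"
    by (rule key[of "p2 (a@b)"])
       (use assms[symmetric] cf2 nt2 in \<open>auto simp: up2_def up_def p2_def asg_def\<close>)
qed

end
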